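(* Let $r,k\geq 2$ be integers. Then $D_{r,k}$ is a numerical semigroup.
   Context: For positive integers $v,b,r,k$, a $(v,b,r,k)$-configuration is a connected bipartite graph with $v$ vertices on one side, each of degree $r$, and $b$ vertices on the other side, each of degree $k$, containing no cycle of length $4$. By convention the empty graph (with $v=b=0$) is also regarded as a configuration. A tuple $(v,b,r,k)$ is configurable if a $(v,b,r,k)$-configuration exists. Let $\mathbb{N}_0=\{0,1,2,\dots\}$ and define $$D_{r,k}=\left\{d\in\mathbb{N}_0:\left(d\tfrac{k}{\gcd(r,k)},\,d\tfrac{r}{\gcd(r,k)},\,r,\,k\right)\text{ is configurable}\right\}.$$ A numerical semigroup is a subset of $\mathbb{N}_0$ containing $0$, closed under addition, whose complement in $\mathbb{N}_0$ is finite. *)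

theory Defs
  imports Main
begin

text \<open>A bipartite graph with point side {0..<v} and line side {0..<b} is encoded by
  its edge (incidence) relation I, a set of pairs (point, line).\<close>

definition bip_adj :: "(nat \<times> nat) set \<Rightarrow> ((nat + nat) \<times> (nat + nat)) set" where
  "bip_adj I = {(Inl p, Inr l) | p l. (p, l) \<in> I} \<union> {(Inr l, Inl p) | p l. (p, l) \<in> I}"

definition bip_vertices :: "nat \<Rightarrow> nat \<Rightarrow> (nat + nat) set" where
  "bip_vertices v b = Inl ` {..<v} \<union> Inr ` {..<b}"

definition is_configuration :: "nat \<Rightarrow> nat \<Rightarrow> nat \<Rightarrow> nat \<Rightarrow> (nat \<times> nat) set \<Rightarrow> bool" where
  "is_configuration v b r k I \<longleftrightarrow>
     I \<subseteq> {..<v} \<times> {..<b}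
   \<and> (\<forall>p<v. card {l. (p, l) \<in> I} = r)
   \<and> (\<forall>l<b. card {p. (p, l) \<in> I} = k)
   \<and> (\<forall>p q l m. p \<noteq> q \<and> l \<noteq> m \<and> (p, l) \<in> I \<and> (q, l) \<in> I \<and> (p, m) \<in> I \<and> (q, m) \<in> I \<longrightarrow> False)
   \<and> (\<forall>x\<in>bip_vertices v b. \<forall>y\<in>bip_vertices v b. (x, y) \<in> (bip_adj I)\<^sup>*)"

text \<open>The empty graph (v = b = 0) is a configuration by convention.\<close>
definition configurable :: "nat \<Rightarrow> nat \<Rightarrow> nat \<Rightarrow> nat \<Rightarrow> bool" where
  "configurable v b r k \<longleftrightarrow> (v = 0 \<and> b = 0) \<or> (\<exists>I. is_configuration v b r k I)"

definition D :: "nat \<Rightarrow> nat \<Rightarrow> nat set" where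
  "D r k = {d. configurable (d * (k div gcd r k)) (d * (r div gcd r k)) r k}"

definition numerical_semigroup :: "nat set \<Rightarrow> bool" where
  "numerical_semigroup S \<longleftrightarrow> 0 \<in> S \<and> (\<forall>x\<in>S. \<forall>y\<in>S. x + y \<in> S) \<and> finite (UNIV - S)"

end

theory Submission
  imports Defs "HOL-Number_Theory.Cong"
begin

lemma sym_diff_pair:
  assumes "sym E" shows "sym (E - {(x,y),(y,x)})"
  using assms unfolding sym_def by blast

lemma rtrancl_sym_swap:
  assumes "sym E" "(x,y) \<in> E\<^sup>*" shows "(y,x) \<in> E\<^sup>*"
  using sym_rtrancl[OF assms(1)] assms(2) unfolding sym_def by blast

lemma nonbridge_exists:
  assumes fin: "finite V" and sub: "E \<subseteq> V \<times> V" and sE: "sym E"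
    and irr: "\<forall>x. (x,x) \<notin> E" and u: "u \<in> V"
    and deg: "\<forall>x\<in>V. \<exists>y z. y \<noteq> z \<and> (x,y) \<in> E \<and> (x,z) \<in> E"
  shows "\<exists>x y. (x,y) \<in> E \<and> (x,y) \<in> (E - {(x,y),(y,x)})\<^sup>*"
proof (rule ccontr)
  assume nb: "\<not> ?thesis"
  define S where "S = (\<lambda>(x,y). {w. (y,w) \<in> (E - {(x,y),(y,x)})\<^sup>*})"
  have Ssub: "S (x,y) \<subseteq> V" if "(x,y) \<in> E" for x y
  proof
    fix w assume "w \<in> S (x,y)"
    hence "(y,w) \<in> (E - {(x,y),(y,x)})\<^sup>*" by (simp add: S_def)
    thus "w \<in> V" using that sub
      by (induction rule: rtrancl_induct) auto
  qed
  from deg u obtain y0 where "(u,y0) \<in> E" by blast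
  then obtain e where e: "e \<in> E" and emin: "\<forall>e'. e' \<in> E \<longrightarrow> card (S e) \<le> card (S e')"
    using ex_has_least_nat[of "\<lambda>e. e \<in> E" "(u,y0)" "\<lambda>e. card (S e)"] by blast
  obtain x y where exy: "e = (x,y)" by (cases e)
  have "y \<in> V" using e exy sub by auto
  with deg obtain z1 z2 where "z1 \<noteq> z2" "(y,z1) \<in> E" "(y,z2) \<in> E" by blast
  then obtain z where yz: "(y,z) \<in> E" and zx: "z \<noteq> x" by blast
  have xy: "x \<noteq> y" using e exy irr by auto
  define E1 where "E1 = E - {(x,y),(y,x)}"
  define E2 where "E2 = E - {(y,z),(z,y)}"
  have nb2: "(z,y) \<notin> E2\<^sup>*"
  proof
    assume "(z,y) \<in> E2\<^sup>*"
    hence "(y,z) \<in> E2\<^sup>*" using rtrancl_sym_swap[OF sym_diff_pair[OF sE]] E2_def by blast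
    thus False using nb yz E2_def by blast
  qed
  have incl: "(y,w) \<in> E1\<^sup>*" if "(z,w) \<in> E2\<^sup>*" for w
    using that
  proof (induction rule: rtrancl_induct)
    case base
    have "(y,z) \<in> E1" using yz zx xy E1_def by auto
    thus ?case by blast
  next
    case (step w w')
    show ?case
    proof (cases "(w,w') \<in> E1")
      case True thus ?thesis using step by (meson rtrancl.rtrancl_into_rtrancl)
    next
      case False
      with step(2) have "(w,w') = (x,y) \<or> (w,w') = (y,x)" by (auto simp: E1_def E2_def)
      thus ?thesis
      proof
        assume "(w,w') = (x,y)" thus ?thesis by auto
      next
        assume "(w,w') = (y,x)" thus ?thesis using step(1) nb2 by auto
      qed
    qed
  qed
  have "S (y,z) \<subseteq> S (x,y)" using incl by (auto simp: S_def E1_def E2_def)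
  moreover have "y \<in> S (x,y)" by (simp add: S_def)
  moreover have "y \<notin> S (y,z)" using nb2 by (simp add: S_def E2_def)
  moreover have "finite (S (x,y))" using Ssub[of x y] e exy fin finite_subset by blast
  ultimately have "card (S (y,z)) < card (S (x,y))"
    by (metis psubsetI psubset_card_mono)
  with emin yz exy show False by fastforce
qed

lemma remove_nonbridge_conn:
  assumes sE: "sym E" and nbr: "(x,y) \<in> (E - {(x,y),(y,x)})\<^sup>*" and ab: "(a,b) \<in> E\<^sup>*"
  shows "(a,b) \<in> (E - {(x,y),(y,x)})\<^sup>*"
  using ab
proof (induction rule: rtrancl_induct)
  case base then show ?case by simp
next
  case (step u w)
  have yx: "(y,x) \<in> (E - {(x,y),(y,x)})\<^sup>*"
    using rtrancl_sym_swap[OF sym_diff_pair[OF sE] nbr] .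
  show ?case
  proof (cases "(u,w) \<in> {(x,y),(y,x)}")
    case True
    then show ?thesis using step(3) nbr yx by (auto intro: rtrancl_trans)
  next
    case False
    then show ?thesis using step by (meson DiffI rtrancl.rtrancl_into_rtrancl)
  qed
qed

lemma remove_edge_two_sides:
  assumes ab: "(x,b) \<in> E\<^sup>*"
  shows "(x,b) \<in> (E - {(x,y),(y,x)})\<^sup>* \<or> (y,b) \<in> (E - {(x,y),(y,x)})\<^sup>*"
  using ab
proof (induction rule: rtrancl_induct)
  case base then show ?case by simp
next
  case (step u w)
  show ?case
  proof (cases "(u,w) \<in> {(x,y),(y,x)}")
    case True
    then show ?thesis by auto
  next
    case False
    then show ?thesis using step by (meson DiffI rtrancl.rtrancl_into_rtrancl)
  qed
qed

lemma bip_adj_mono: "J \<subseteq> J' \<Longrightarrow> bip_adj J \<subseteq> bip_adj J'"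
  unfolding bip_adj_def by blast

lemma rtrancl_bip_mono: "J \<subseteq> J' \<Longrightarrow> (a,b) \<in> (bip_adj J)\<^sup>* \<Longrightarrow> (a,b) \<in> (bip_adj J')\<^sup>*"
  using rtrancl_mono[OF bip_adj_mono] by blast

lemma sym_bip_adj: "sym (bip_adj I)"
  unfolding bip_adj_def sym_def by blast

lemma bip_adj_edge: "(p,l) \<in> I \<Longrightarrow> (Inl p, Inr l) \<in> bip_adj I \<and> (Inr l, Inl p) \<in> bip_adj I"
  unfolding bip_adj_def by blast

lemma bip_adj_diff: "bip_adj (I - {(p,l)}) = bip_adj I - {(Inl p, Inr l), (Inr l, Inl p)}"
  unfolding bip_adj_def by blast

definition hv :: "nat \<Rightarrow> nat \<Rightarrow> nat + nat \<Rightarrow> nat + nat" where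
  "hv v1 b1 = case_sum (\<lambda>p. Inl (v1+p)) (\<lambda>l. Inr (b1+l))"

definition shiftI :: "nat \<Rightarrow> nat \<Rightarrow> (nat \<times> nat) set \<Rightarrow> (nat \<times> nat) set" where
  "shiftI v1 b1 J = (\<lambda>(p,l). (v1+p, b1+l)) ` J"

lemma mem_shiftI: "(p,l) \<in> shiftI v1 b1 J \<longleftrightarrow> v1 \<le> p \<and> b1 \<le> l \<and> (p - v1, l - b1) \<in> J"
proof
  assume "(p,l) \<in> shiftI v1 b1 J"
  then obtain p' l' where "(p',l') \<in> J" "p = v1+p'" "l = b1+l'" unfolding shiftI_def by auto
  then show "v1 \<le> p \<and> b1 \<le> l \<and> (p - v1, l - b1) \<in> J" by simp
next
  assume a: "v1 \<le> p \<and> b1 \<le> l \<and> (p - v1, l - b1) \<in> J"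
  then have "(p,l) = (\<lambda>(p,l). (v1+p, b1+l)) (p - v1, l - b1)" by simp
  then show "(p,l) \<in> shiftI v1 b1 J" unfolding shiftI_def using a by (metis rev_image_eqI)
qed

lemma shift_adj: "(a,b) \<in> bip_adj J \<Longrightarrow> (hv v1 b1 a, hv v1 b1 b) \<in> bip_adj (shiftI v1 b1 J)"
  unfolding bip_adj_def hv_def shiftI_def by auto

lemma shift_rtrancl: "(a,b) \<in> (bip_adj J)\<^sup>* \<Longrightarrow> (hv v1 b1 a, hv v1 b1 b) \<in> (bip_adj (shiftI v1 b1 J))\<^sup>*"
proof (induction rule: rtrancl_induct)
  case base then show ?case by simp
next
  case (step y z) then show ?case by (meson rtrancl.rtrancl_into_rtrancl shift_adj)
qed

lemma two_elems: "card A \<ge> 2 \<Longrightarrow> \<exists>y z. y \<noteq> z \<and> y \<in> A \<and> z \<in> A"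
proof -
  assume a: "card A \<ge> 2"
  then have "finite A" using card.infinite by fastforce
  obtain y where "y \<in> A" using a by fastforce
  then have "card (A - {y}) \<ge> 1" using a \<open>finite A\<close> by simp
  then have "A - {y} \<noteq> {}" by (metis card.empty not_one_le_zero)
  then obtain z where "z \<in> A - {y}" by blast
  then show ?thesis using \<open>y \<in> A\<close> by blast
qed

lemma card_swap1:
  assumes "finite A" "l1 \<in> A" "m \<notin> A" "card A = r"
  shows "card ((A - {l1}) \<union> {m}) = r"
  using assms by (simp add: card_Diff_singleton) (metis One_nat_def Suc_pred card_gt_0_iff empty_iff)

lemma hv_Inl: "(Inl p = hv v1 b1 y) \<longleftrightarrow> (\<exists>q. y = Inl q \<and> p = v1+q)"
  by (cases y) (auto simp: hv_def)
lemma hv_Inr: "(Inr p = hv v1 b1 y) \<longleftrightarrow> (\<exists>q. y = Inr q \<and> p = b1+q)"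
  by (cases y) (auto simp: hv_def)

lemma bip_vertices_split:
  "x \<in> bip_vertices (v1+v2) (b1+b2) \<longleftrightarrow> x \<in> bip_vertices v1 b1 \<or> (\<exists>y\<in>bip_vertices v2 b2. x = hv v1 b1 y)"
proof (cases x)
  case (Inl p)
  have f1: "p < v1 + v2 \<longleftrightarrow> p < v1 \<or> (\<exists>q<v2. p = v1 + q)"
    by (metis add_diff_inverse_nat add_less_cancel_left not_less trans_less_add1)
  have f2: "(\<exists>y\<in>bip_vertices v2 b2. Inl p = hv v1 b1 y) \<longleftrightarrow> (\<exists>q<v2. p = v1 + q)"
    unfolding hv_Inl bip_vertices_def by blast
  have f3: "\<And>v b. Inl p \<in> bip_vertices v b \<longleftrightarrow> p < v" by (auto simp: bip_vertices_def)
  show ?thesis unfolding Inl by (simp only: f3 f1 f2)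
next
  case (Inr l)
  have f1: "l < b1 + b2 \<longleftrightarrow> l < b1 \<or> (\<exists>q<b2. l = b1 + q)"
    by (metis add_diff_inverse_nat add_less_cancel_left not_less trans_less_add1)
  have f2: "(\<exists>y\<in>bip_vertices v2 b2. Inr l = hv v1 b1 y) \<longleftrightarrow> (\<exists>q<b2. l = b1 + q)"
    unfolding hv_Inr bip_vertices_def by blast
  have f3: "\<And>v b. Inr l \<in> bip_vertices v b \<longleftrightarrow> l < b" by (auto simp: bip_vertices_def)
  show ?thesis unfolding Inr by (simp only: f3 f1 f2)
qed

lemma card_swap2:
  assumes "finite A" "l \<in> A" "m \<notin> f ` (A - {l})" "inj f" "card A = r"
  shows "card (f ` (A - {l}) \<union> {m}) = r"
proof -
  have c1: "card (f ` (A - {l})) = card (A - {l})" using assms(4) by (simp add: card_image inj_on_subset)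
  have c2: "card (A - {l}) = r - 1" using assms(1,2,5) by (simp add: card_Diff_singleton)
  have r1: "r \<ge> 1" using assms(1,2,5) card_gt_0_iff by (metis One_nat_def Suc_leI empty_iff)
  have fin: "finite (f ` (A - {l}))" using assms(1) by simp
  have "card (f ` (A - {l}) \<union> {m}) = card (insert m (f ` (A - {l})))" by simp
  also have "\<dots> = Suc (card (f ` (A - {l})))" using card_insert_disjoint[OF fin assms(3)] .
  finally show ?thesis using c1 c2 r1 by simp
qed

lemma mem_shift_image: "(x::nat) \<in> (\<lambda>l. b + l) ` A \<longleftrightarrow> b \<le> x \<and> x - b \<in> A"
  by (auto simp: image_iff) (metis add_diff_inverse_nat not_le)

lemma combine:
  assumes C1: "is_configuration v1 b1 r k I1" and C2: "is_configuration v2 b2 r k I2"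
    and v1: "v1 > 0" and v2: "v2 > 0" and r: "r \<ge> 2" and k: "k \<ge> 2"
  shows "\<exists>I. is_configuration (v1+v2) (b1+b2) r k I"
proof -
  note c1 = C1[unfolded is_configuration_def]
  note c2 = C2[unfolded is_configuration_def]
  note sub1 = c1[THEN conjunct1]
  note dp1 = c1[THEN conjunct2, THEN conjunct1]
  note dl1 = c1[THEN conjunct2, THEN conjunct2, THEN conjunct1]
  note q1 = c1[THEN conjunct2, THEN conjunct2, THEN conjunct2, THEN conjunct1]
  note cn1 = c1[THEN conjunct2, THEN conjunct2, THEN conjunct2, THEN conjunct2]
  note sub2 = c2[THEN conjunct1]
  note dp2 = c2[THEN conjunct2, THEN conjunct1]
  note dl2 = c2[THEN conjunct2, THEN conjunct2, THEN conjunct1]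
  note q2 = c2[THEN conjunct2, THEN conjunct2, THEN conjunct2, THEN conjunct1]
  note cn2 = c2[THEN conjunct2, THEN conjunct2, THEN conjunct2, THEN conjunct2]
  have "\<exists>x y. (x,y) \<in> bip_adj I1 \<and> (x,y) \<in> (bip_adj I1 - {(x,y),(y,x)})\<^sup>*"
  proof (rule nonbridge_exists[where V = "bip_vertices v1 b1" and u = "Inl 0"])
    show "finite (bip_vertices v1 b1)" by (simp add: bip_vertices_def)
    show "bip_adj I1 \<subseteq> bip_vertices v1 b1 \<times> bip_vertices v1 b1"
      using sub1 by (auto simp: bip_adj_def bip_vertices_def)
    show "sym (bip_adj I1)" by (rule sym_bip_adj)
    show "\<forall>x. (x, x) \<notin> bip_adj I1" by (auto simp: bip_adj_def)
    show "Inl 0 \<in> bip_vertices v1 b1" using v1 by (simp add: bip_vertices_def)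
    show "\<forall>x\<in>bip_vertices v1 b1. \<exists>y z. y \<noteq> z \<and> (x, y) \<in> bip_adj I1 \<and> (x, z) \<in> bip_adj I1"
    proof
      fix x assume "x \<in> bip_vertices v1 b1"
      then consider p where "x = Inl p" "p < v1" | l where "x = Inr l" "l < b1"
        by (auto simp: bip_vertices_def)
      then show "\<exists>y z. y \<noteq> z \<and> (x, y) \<in> bip_adj I1 \<and> (x, z) \<in> bip_adj I1"
      proof cases
        case (1 p)
        then obtain y z where "y \<noteq> z" "y \<in> {l. (p,l) \<in> I1}" "z \<in> {l. (p,l) \<in> I1}"
          using two_elems[of "{l. (p,l) \<in> I1}"] dp1 r by auto
        then show ?thesis using 1 by (intro exI[of _ "Inr y"] exI[of _ "Inr z"]) (auto simp: bip_adj_def)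
      next
        case (2 l)
        then obtain y z where "y \<noteq> z" "y \<in> {p. (p,l) \<in> I1}" "z \<in> {p. (p,l) \<in> I1}"
          using two_elems[of "{p. (p,l) \<in> I1}"] dl1 k by auto
        then show ?thesis using 2 by (intro exI[of _ "Inl y"] exI[of _ "Inl z"]) (auto simp: bip_adj_def)
      qed
    qed
  qed
  then obtain x y where xy: "(x,y) \<in> bip_adj I1" "(x,y) \<in> (bip_adj I1 - {(x,y),(y,x)})\<^sup>*" by blast
  have "\<exists>p1 l1. (p1,l1) \<in> I1 \<and> (Inl p1, Inr l1) \<in> (bip_adj I1 - {(Inl p1, Inr l1),(Inr l1, Inl p1)})\<^sup>*"
  proof -
    from xy(1) consider p l where "(p,l) \<in> I1" "x = Inl p" "y = Inr l" | p l where "(p,l) \<in> I1" "x = Inr l" "y = Inl p"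
      unfolding bip_adj_def by blast
    then show ?thesis
    proof cases
      case 1 then show ?thesis using xy by blast
    next
      case 2
      have "(y,x) \<in> (bip_adj I1 - {(x,y),(y,x)})\<^sup>*"
        using rtrancl_sym_swap[OF sym_diff_pair[OF sym_bip_adj] xy(2)] .
      then show ?thesis using 2 by (simp add: insert_commute) blast
    qed
  qed
  then obtain p1 l1 where e1: "(p1,l1) \<in> I1"
    and nb1: "(Inl p1, Inr l1) \<in> (bip_adj I1 - {(Inl p1, Inr l1),(Inr l1, Inl p1)})\<^sup>*" by blast
  have "card {l. (0,l) \<in> I2} = r" using dp2 v2 by blast
  then have "{l. (0,l) \<in> I2} \<noteq> {}" using r by (metis card.empty not_numeral_le_zero)
  then obtain l2 where e2: "(0,l2) \<in> I2" by blast
  define p2 :: nat where "p2 = 0"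
  have e2': "(p2,l2) \<in> I2" using e2 p2_def by simp
  have bd: "p1 < v1" "l1 < b1" "p2 < v2" "l2 < b2" using e1 e2' sub1 sub2 by auto
  define J where "J = (I1 - {(p1,l1)}) \<union> shiftI v1 b1 (I2 - {(p2,l2)}) \<union> {(p1, b1+l2), (v1+p2, l1)}"
  have memJ: "(p,l) \<in> J \<longleftrightarrow> ((p,l)\<in>I1 \<and> (p,l) \<noteq> (p1,l1))
     \<or> (v1 \<le> p \<and> b1 \<le> l \<and> (p-v1,l-b1) \<in> I2 \<and> (p-v1,l-b1) \<noteq> (p2,l2))
     \<or> (p=p1 \<and> l=b1+l2) \<or> (p = v1+p2 \<and> l = l1)" for p l
    unfolding J_def Un_iff Diff_iff mem_shiftI by auto
  have s1: "(p,l) \<in> I1 \<Longrightarrow> p < v1 \<and> l < b1" for p l using sub1 by auto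
  have s2: "(p,l) \<in> I2 \<Longrightarrow> p < v2 \<and> l < b2" for p l using sub2 by auto
  have P1: "J \<subseteq> {..<v1+v2} \<times> {..<b1+b2}"
  proof
    fix z assume "z \<in> J"
    obtain p l where z: "z = (p,l)" by (cases z)
    show "z \<in> {..<v1+v2} \<times> {..<b1+b2}" using \<open>z \<in> J\<close> unfolding z memJ using s1 s2 bd
      by (auto; fastforce)
  qed
  have P2: "\<forall>p<v1+v2. card {l. (p, l) \<in> J} = r"
  proof (intro allI impI)
    fix p assume p: "p < v1+v2"
    show "card {l. (p, l) \<in> J} = r"
    proof (cases "p < v1")
      case True
      show ?thesis
      proof (cases "p = p1")
        case True
        have eq: "{l. (p, l) \<in> J} = id ` ({l. (p1,l) \<in> I1} - {l1}) \<union> {b1+l2}"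
        proof (rule set_eqI)
          fix l show "l \<in> {l. (p, l) \<in> J} \<longleftrightarrow> l \<in> id ` ({l. (p1,l) \<in> I1} - {l1}) \<union> {b1+l2}"
            using memJ[of p l] True \<open>p < v1\<close> by auto
        qed
        have fin: "finite {l. (p1,l) \<in> I1}"
          by (rule finite_subset[of _ "{..<b1}"]) (use s1 in auto)
        have nm: "b1+l2 \<notin> id ` ({l. (p1,l) \<in> I1} - {l1})" using s1 by auto
        have cr: "card {l. (p1,l) \<in> I1} = r" using dp1 bd by simp
        show ?thesis unfolding eq by (rule card_swap2[OF fin _ nm _ cr]) (use e1 in auto)
      next
        case False
        have "{l. (p, l) \<in> J} = {l. (p,l) \<in> I1}"
        proof (rule set_eqI)
          fix l show "l \<in> {l. (p, l) \<in> J} \<longleftrightarrow> l \<in> {l. (p,l) \<in> I1}"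
            using memJ[of p l] False \<open>p < v1\<close> by auto
        qed
        then show ?thesis using dp1 \<open>p < v1\<close> by simp
      qed
    next
      case False
      define q where "q = p - v1"
      have q: "q < v2" "p = v1 + q" using p False q_def by auto
      show ?thesis
      proof (cases "q = p2")
        case True
        have eq: "{l. (p, l) \<in> J} = (\<lambda>l. b1 + l) ` ({l. (q,l) \<in> I2} - {l2}) \<union> {l1}"
        proof (rule set_eqI)
          fix l show "l \<in> {l. (p, l) \<in> J} \<longleftrightarrow> l \<in> (\<lambda>l. b1 + l) ` ({l. (q,l) \<in> I2} - {l2}) \<union> {l1}"
            using memJ[of p l] True q s1[of p l] bd by (auto simp: mem_shift_image)
        qed
        have fin: "finite {l. (q,l) \<in> I2}"
          by (rule finite_subset[of _ "{..<b2}"]) (use s2 in auto)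
        have nm: "l1 \<notin> (\<lambda>l. b1 + l) ` ({l. (q,l) \<in> I2} - {l2})" using bd by auto
        have cr: "card {l. (q,l) \<in> I2} = r" using dp2 q by simp
        show ?thesis unfolding eq by (rule card_swap2[OF fin _ nm _ cr]) (use e2' True in \<open>auto simp: inj_def\<close>)
      next
        case False
        have eq: "{l. (p, l) \<in> J} = (\<lambda>l. b1 + l) ` {l. (q,l) \<in> I2}"
        proof (rule set_eqI)
          fix l show "l \<in> {l. (p, l) \<in> J} \<longleftrightarrow> l \<in> (\<lambda>l. b1 + l) ` {l. (q,l) \<in> I2}"
            using memJ[of p l] False q s1[of p l] bd by (auto simp: mem_shift_image)
        qed
        show ?thesis unfolding eq using dp2 q by (simp add: card_image inj_on_def)
      qed
    qed
  qed
  have P3: "\<forall>l<b1+b2. card {p. (p, l) \<in> J} = k"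
  proof (intro allI impI)
    fix l assume l: "l < b1+b2"
    show "card {p. (p, l) \<in> J} = k"
    proof (cases "l < b1")
      case True
      show ?thesis
      proof (cases "l = l1")
        case True
        have eq: "{p. (p, l) \<in> J} = id ` ({p. (p,l1) \<in> I1} - {p1}) \<union> {v1+p2}"
        proof (rule set_eqI)
          fix p show "p \<in> {p. (p, l) \<in> J} \<longleftrightarrow> p \<in> id ` ({p. (p,l1) \<in> I1} - {p1}) \<union> {v1+p2}"
            using memJ[of p l] True \<open>l < b1\<close> by auto
        qed
        have fin: "finite {p. (p,l1) \<in> I1}"
          by (rule finite_subset[of _ "{..<v1}"]) (use s1 in auto)
        have nm: "v1+p2 \<notin> id ` ({p. (p,l1) \<in> I1} - {p1})" using s1 by auto
        have cr: "card {p. (p,l1) \<in> I1} = k" using dl1 bd by simp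
        show ?thesis unfolding eq by (rule card_swap2[OF fin _ nm _ cr]) (use e1 in auto)
      next
        case False
        have "{p. (p, l) \<in> J} = {p. (p,l) \<in> I1}"
        proof (rule set_eqI)
          fix p show "p \<in> {p. (p, l) \<in> J} \<longleftrightarrow> p \<in> {p. (p,l) \<in> I1}"
            using memJ[of p l] False \<open>l < b1\<close> by auto
        qed
        then show ?thesis using dl1 \<open>l < b1\<close> by simp
      qed
    next
      case False
      define q where "q = l - b1"
      have q: "q < b2" "l = b1 + q" using l False q_def by auto
      show ?thesis
      proof (cases "q = l2")
        case True
        have eq: "{p. (p, l) \<in> J} = (\<lambda>p. v1 + p) ` ({p. (p,q) \<in> I2} - {p2}) \<union> {p1}"
        proof (rule set_eqI)
          fix p show "p \<in> {p. (p, l) \<in> J} \<longleftrightarrow> p \<in> (\<lambda>p. v1 + p) ` ({p. (p,q) \<in> I2} - {p2}) \<union> {p1}"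
            using memJ[of p l] True q s1[of p l] bd by (auto simp: mem_shift_image)
        qed
        have fin: "finite {p. (p,q) \<in> I2}"
          by (rule finite_subset[of _ "{..<v2}"]) (use s2 in auto)
        have nm: "p1 \<notin> (\<lambda>p. v1 + p) ` ({p. (p,q) \<in> I2} - {p2})" using bd by auto
        have cr: "card {p. (p,q) \<in> I2} = k" using dl2 q by simp
        show ?thesis unfolding eq by (rule card_swap2[OF fin _ nm _ cr]) (use e2' True in \<open>auto simp: inj_def\<close>)
      next
        case False
        have eq: "{p. (p, l) \<in> J} = (\<lambda>p. v1 + p) ` {p. (p,q) \<in> I2}"
        proof (rule set_eqI)
          fix p show "p \<in> {p. (p, l) \<in> J} \<longleftrightarrow> p \<in> (\<lambda>p. v1 + p) ` {p. (p,q) \<in> I2}"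
            using memJ[of p l] False q s1[of p l] bd by (auto simp: mem_shift_image)
        qed
        show ?thesis unfolding eq using dl2 q by (simp add: card_image inj_on_def)
      qed
    qed
  qed
  have P4: "\<forall>p q l m. p \<noteq> q \<and> l \<noteq> m \<and> (p, l) \<in> J \<and> (q, l) \<in> J \<and> (p, m) \<in> J \<and> (q, m) \<in> J \<longrightarrow> False"
  proof (intro allI impI, elim conjE)
    fix p q l m assume H: "p \<noteq> q" "l \<noteq> m" "(p, l) \<in> J" "(q, l) \<in> J" "(p, m) \<in> J" "(q, m) \<in> J"
    have J11: "(x,y) \<in> I1 \<and> (x,y) \<noteq> (p1,l1)" if "(x,y) \<in> J" "x < v1" "y < b1" for x y
      using that memJ[of x y] bd by auto
    have J22: "(x-v1,y-b1) \<in> I2 \<and> (x-v1,y-b1) \<noteq> (p2,l2)" if "(x,y) \<in> J" "\<not> x < v1" "\<not> y < b1" for x y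
      using that memJ[of x y] bd s1[of x y] by auto
    have J12: "x = p1 \<and> y = b1 + l2" if "(x,y) \<in> J" "x < v1" "\<not> y < b1" for x y
      using that memJ[of x y] bd s1[of x y] by auto
    have J21: "x = v1 + p2 \<and> y = l1" if "(x,y) \<in> J" "\<not> x < v1" "y < b1" for x y
      using that memJ[of x y] bd s1[of x y] by auto
    have Q2: False if "\<not> p < v1" "\<not> q < v1" "\<not> l < b1" "\<not> m < b1"
    proof -
      have "p - v1 \<noteq> q - v1" "l - b1 \<noteq> m - b1" using H(1,2) that by auto
      then show False using q2 J22[OF H(3)] J22[OF H(4)] J22[OF H(5)] J22[OF H(6)] that by blast
    qed
    have Q1: False if "p < v1" "q < v1" "l < b1" "m < b1"
      using q1 J11[OF H(3)] J11[OF H(4)] J11[OF H(5)] J11[OF H(6)] that H(1,2) by blast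
    have A1: False if "x < v1" "z < v1" "\<not> y < b1" "(x,y) \<in> J" "(z,y) \<in> J" "x \<noteq> z" for x z y
      using J12[OF that(4) that(1,3)] J12[OF that(5) that(2,3)] that(6) by simp
    have B1: False if "\<not> x < v1" "\<not> z < v1" "y < b1" "(x,y) \<in> J" "(z,y) \<in> J" "x \<noteq> z" for x z y
      using J21[OF that(4) that(1,3)] J21[OF that(5) that(2,3)] that(6) by simp
    have X: False if "x < v1" "\<not> z < v1" "(x,y) \<in> J" "(z,y) \<in> J" "(x,w) \<in> J" "(z,w) \<in> J" "y \<noteq> w" for x z y w
    proof (cases "y < b1")
      case yT: True
      then have zy: "z = v1 + p2 \<and> y = l1" using J21[OF that(4) that(2)] by simp
      show False
      proof (cases "w < b1")
        case True
        then have "w = l1" using J21[OF that(6) that(2)] by simp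
        then show False using zy that(7) by simp
      next
        case False
        then have "x = p1" using J12[OF that(5) that(1)] by simp
        then show False using J11[OF that(3) that(1) yT] zy by simp
      qed
    next
      case yF: False
      then have xy: "x = p1 \<and> y = b1 + l2" using J12[OF that(3) that(1)] by simp
      show False
      proof (cases "w < b1")
        case True
        then have "w = l1" using J21[OF that(6) that(2)] by simp
        then show False using J11[OF that(5) that(1) True] xy by simp
      next
        case False
        then have "w = b1 + l2" using J12[OF that(5) that(1)] by simp
        then show False using xy that(7) by simp
      qed
    qed
    show False
    proof (cases "p < v1")
      case pT: True
      show False
      proof (cases "q < v1")
        case True
        have "l < b1" using A1[OF pT True _ H(3) H(4) H(1)] by blast
        moreover have "m < b1" using A1[OF pT True _ H(5) H(6) H(1)] by blast
        ultimately show False using Q1 pT True by blast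
      next
        case False
        show False using X[OF pT False H(3-6) H(2)] .
      qed
    next
      case pF: False
      show False
      proof (cases "q < v1")
        case True
        show False using X[OF True pF H(4) H(3) H(6) H(5) H(2)] .
      next
        case False
        have "\<not> l < b1" using B1[OF pF False _ H(3) H(4) H(1)] by blast
        moreover have "\<not> m < b1" using B1[OF pF False _ H(5) H(6) H(1)] by blast
        ultimately show False using Q2 pF False by blast
      qed
    qed
  qed
  have JI1: "I1 - {(p1,l1)} \<subseteq> J" unfolding J_def by blast
  have JI2: "shiftI v1 b1 (I2 - {(p2,l2)}) \<subseteq> J" unfolding J_def by blast
  have root1: "(Inl p1, x) \<in> (bip_adj J)\<^sup>*" if "x \<in> bip_vertices v1 b1" for x
  proof -
    have "Inl p1 \<in> bip_vertices v1 b1" using bd by (simp add: bip_vertices_def)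
    then have "(Inl p1, x) \<in> (bip_adj I1)\<^sup>*" using cn1 that by blast
    then have "(Inl p1, x) \<in> (bip_adj I1 - {(Inl p1, Inr l1),(Inr l1, Inl p1)})\<^sup>*"
      using remove_nonbridge_conn[OF sym_bip_adj nb1] by blast
    then have "(Inl p1, x) \<in> (bip_adj (I1 - {(p1,l1)}))\<^sup>*" by (simp only: bip_adj_diff)
    then show ?thesis using rtrancl_bip_mono[OF JI1] by blast
  qed
  have root2: "(Inl p1, hv v1 b1 y) \<in> (bip_adj J)\<^sup>*" if "y \<in> bip_vertices v2 b2" for y
  proof -
    have "Inl p2 \<in> bip_vertices v2 b2" using bd by (simp add: bip_vertices_def)
    then have "(Inl p2, y) \<in> (bip_adj I2)\<^sup>*" using cn2 that by blast
    then have "(Inl p2, y) \<in> (bip_adj I2 - {(Inl p2, Inr l2),(Inr l2, Inl p2)})\<^sup>*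
        \<or> (Inr l2, y) \<in> (bip_adj I2 - {(Inl p2, Inr l2),(Inr l2, Inl p2)})\<^sup>*"
      by (rule remove_edge_two_sides)
    then have "(Inl p2, y) \<in> (bip_adj (I2 - {(p2,l2)}))\<^sup>* \<or> (Inr l2, y) \<in> (bip_adj (I2 - {(p2,l2)}))\<^sup>*"
      by (simp only: bip_adj_diff)
    then have "(hv v1 b1 (Inl p2), hv v1 b1 y) \<in> (bip_adj J)\<^sup>* \<or> (hv v1 b1 (Inr l2), hv v1 b1 y) \<in> (bip_adj J)\<^sup>*"
      using shift_rtrancl rtrancl_bip_mono[OF JI2] by blast
    then have c: "(Inl (v1+p2), hv v1 b1 y) \<in> (bip_adj J)\<^sup>* \<or> (Inr (b1+l2), hv v1 b1 y) \<in> (bip_adj J)\<^sup>*"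
      by (simp add: hv_def)
    have ed1: "(Inl p1, Inr (b1+l2)) \<in> bip_adj J" using bip_adj_edge[of p1 "b1+l2" J] unfolding J_def by blast
    have ed2: "(Inr l1, Inl (v1+p2)) \<in> bip_adj J" using bip_adj_edge[of "v1+p2" l1 J] unfolding J_def by blast
    have r1: "(Inl p1, Inr l1) \<in> (bip_adj J)\<^sup>*" using root1 bd by (simp add: bip_vertices_def)
    from c show ?thesis
    proof
      assume "(Inl (v1+p2), hv v1 b1 y) \<in> (bip_adj J)\<^sup>*"
      then show ?thesis using r1 ed2 by (meson rtrancl_into_rtrancl rtrancl_trans)
    next
      assume "(Inr (b1+l2), hv v1 b1 y) \<in> (bip_adj J)\<^sup>*"
      then show ?thesis using ed1 by (meson converse_rtrancl_into_rtrancl)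
    qed
  qed
  have rootall: "(Inl p1, x) \<in> (bip_adj J)\<^sup>*" if "x \<in> bip_vertices (v1+v2) (b1+b2)" for x
    using that root1 root2 unfolding bip_vertices_split by blast
  have P5: "\<forall>x\<in>bip_vertices (v1+v2) (b1+b2). \<forall>y\<in>bip_vertices (v1+v2) (b1+b2). (x, y) \<in> (bip_adj J)\<^sup>*"
  proof (intro ballI)
    fix x y assume "x \<in> bip_vertices (v1+v2) (b1+b2)" "y \<in> bip_vertices (v1+v2) (b1+b2)"
    then have "(x, Inl p1) \<in> (bip_adj J)\<^sup>*" "(Inl p1, y) \<in> (bip_adj J)\<^sup>*"
      using rootall rtrancl_sym_swap[OF sym_bip_adj] by blast+
    then show "(x, y) \<in> (bip_adj J)\<^sup>*" by (rule rtrancl_trans)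
  qed
  show ?thesis using P1 P2 P3 P4 P5 unfolding is_configuration_def by blast
qed

definition liftI :: "nat \<Rightarrow> nat \<Rightarrow> nat \<Rightarrow> nat \<Rightarrow> (nat \<Rightarrow> nat \<Rightarrow> nat \<Rightarrow> int) \<Rightarrow> (nat \<times> nat) set" where
  "liftI kk rr g n F = {(i*n + nat ((int c + F i a j) mod int n), a*n + c) | i a j c. i<kk \<and> a<rr \<and> j<g \<and> c<n}"

lemma decode: "(x::nat) < n \<Longrightarrow> x' < n \<Longrightarrow> i*n + x = i'*n + x' \<longleftrightarrow> i = i' \<and> x = x'"
proof
  assume a: "x < n" "x' < n" "i*n + x = i'*n + x'"
  have n0: "n > 0" using a(1) by simp
  have e1: "i = (i*n+x) div n" "x = (i*n+x) mod n" using a(1) n0 by simp_all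
  have e2: "i' = (i'*n+x') div n" "x' = (i'*n+x') mod n" using a(2) n0 by simp_all
  show "i = i' \<and> x = x'" using e1 e2 a(3) by metis
qed auto

lemma nat_mod_lt: "n > 0 \<Longrightarrow> nat ((z::int) mod int n) < n"
  by (simp add: nat_less_iff)

lemma lt_mult_bound: "i < kk \<Longrightarrow> (x::nat) < n \<Longrightarrow> i*n + x < kk*n"
proof -
  assume "i < kk" "x < n"
  then have "i*n + x < i*n + n" by simp
  also have "\<dots> = (i+1)*n" by simp
  also have "\<dots> \<le> kk*n" using \<open>i<kk\<close> by (intro mult_le_mono1) simp
  finally show ?thesis .
qed

lemma split_mod: "n > 0 \<Longrightarrow> p = (p div n)*n + p mod n \<and> p mod n < n" for p n :: nat
  by simp

lemma modA: "int t = x mod int n \<Longrightarrow> (int c + int t * V) mod int n = (int c + (V * x) mod int n) mod int n"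
proof -
  assume ti: "int t = x mod int n"
  have "(int c + int t * V) mod int n = (int c + (int t * V) mod int n) mod int n" by (simp add: mod_add_right_eq)
  also have "(int t * V) mod int n = (x * V) mod int n" unfolding ti by (simp add: mod_mult_left_eq)
  finally show ?thesis by (simp add: mult.commute)
qed
lemma modB: "[V * x = 1] (mod int n) \<Longrightarrow> (int c + (V * x) mod int n) mod int n = (int c + 1) mod int n"
proof -
  assume "[V * x = 1] (mod int n)"
  then have "(V * x) mod int n = 1 mod int n" unfolding cong_def .
  then have "(int c + (V * x) mod int n) mod int n = (int c + 1 mod int n) mod int n" by simp
  also have "\<dots> = (int c + 1) mod int n" by (simp add: mod_add_right_eq)
  finally show ?thesis .
qed
lemma modC: "nat ((int c + 1) mod int n) = (c+1) mod n"
proof -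
  have "int c + 1 = int (c+1)" by simp
  then have "(int c + 1) mod int n = int ((c+1) mod n)" by (simp only: of_nat_mod)
  then show ?thesis by simp
qed

lemma lift_config:
  fixes F :: "nat \<Rightarrow> nat \<Rightarrow> nat \<Rightarrow> int"
  assumes n0: "n > 0" and kk0: "kk > 0" and rr0: "rr > 0" and g0: "g > 0"
    and H1: "\<And>i a j j'. i<kk \<Longrightarrow> a<rr \<Longrightarrow> j<g \<Longrightarrow> j'<g \<Longrightarrow> int n dvd (F i a j - F i a j') \<Longrightarrow> j = j'"
    and H2: "\<And>i i' a a' j1 j2 j3 j4. i<kk \<Longrightarrow> i'<kk \<Longrightarrow> a<rr \<Longrightarrow> a'<rr \<Longrightarrow> j1<g \<Longrightarrow> j2<g \<Longrightarrow> j3<g \<Longrightarrow> j4<g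
        \<Longrightarrow> int n dvd (F i a j1 - F i' a j2 - F i a' j3 + F i' a' j4) \<Longrightarrow> (i = i' \<and> j1 = j2) \<or> (a = a' \<and> j1 = j3)"
    and T1: "\<And>i. i<kk \<Longrightarrow> F i 0 0 = 0" and T2: "\<And>a. a<rr \<Longrightarrow> F 0 a 0 = 0"
    and S: "is < kk" "as < rr" "js < g" "coprime (F is as js) (int n)"
  shows "is_configuration (kk*n) (rr*n) (rr*g) (kk*g) (liftI kk rr g n F)"
proof -
  define I where "I = liftI kk rr g n F"
  define X where "X = (\<lambda>i a j c. nat ((int c + F i a j) mod int n))"
  have Xlt: "X i a j c < n" for i a j c unfolding X_def using n0 by (simp add: nat_less_iff)
  have Xint: "int (X i a j c) = (int c + F i a j) mod int n" for i a j c
    unfolding X_def using n0 by simp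
  have memI: "(p,l) \<in> I \<longleftrightarrow> (\<exists>i a j c. i<kk \<and> a<rr \<and> j<g \<and> c<n \<and> p = i*n + X i a j c \<and> l = a*n + c)" for p l
    unfolding I_def liftI_def X_def by blast
  have P1: "I \<subseteq> {..<kk*n} \<times> {..<rr*n}"
  proof
    fix z assume "z \<in> I"
    obtain p l where z: "z = (p,l)" by (cases z)
    then show "z \<in> {..<kk*n} \<times> {..<rr*n}" using \<open>z \<in> I\<close> unfolding memI z
      using lt_mult_bound Xlt by auto
  qed
  have P2: "\<forall>p<kk*n. card {l. (p, l) \<in> I} = rr*g"
  proof (intro allI impI)
    fix p assume p: "p < kk*n"
    define i where "i = p div n"
    define x where "x = p mod n"
    have px: "p = i*n + x" "x < n" "i < kk" unfolding i_def x_def using n0 p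
      by (simp_all add: less_mult_imp_div_less)
    define f where "f = (\<lambda>(a,j). a*n + nat ((int x - F i a j) mod int n))"
    have eq: "{l. (p, l) \<in> I} = f ` ({..<rr} \<times> {..<g})"
    proof (rule set_eqI)
      fix l
      show "l \<in> {l. (p, l) \<in> I} \<longleftrightarrow> l \<in> f ` ({..<rr} \<times> {..<g})"
      proof
        assume "l \<in> {l. (p, l) \<in> I}"
        then obtain i' a j c where h: "i'<kk" "a<rr" "j<g" "c<n" "p = i'*n + X i' a j c" "l = a*n + c"
          using memI by blast
        have "i'*n + X i' a j c = i*n + x" using h(5) px(1) by simp
        then have "i' = i" "X i' a j c = x" using decode[OF Xlt px(2)] by blast+
        then have "int x = (int c + F i a j) mod int n" using Xint by metis
        then have "(int x - F i a j) mod int n = int c" using h(4)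
          by (metis add_diff_cancel_right' mod_diff_left_eq of_nat_less_iff mod_pos_pos_trivial of_nat_0_le_iff)
        then have "l = f (a,j)" unfolding f_def using h(6) by simp
        then show "l \<in> f ` ({..<rr} \<times> {..<g})" using h by auto
      next
        assume "l \<in> f ` ({..<rr} \<times> {..<g})"
        then obtain a j where h: "a<rr" "j<g" "l = f (a,j)" by auto
        define c where "c = nat ((int x - F i a j) mod int n)"
        have c: "c < n" unfolding c_def using n0 by (simp add: nat_less_iff)
        have "int (X i a j c) = ((int x - F i a j) mod int n + F i a j) mod int n"
          using Xint n0 by (simp add: c_def)
        also have "\<dots> = int x" using px(2) by (simp add: mod_add_left_eq)
        finally have "X i a j c = x" by simp
        moreover have "l = a*n + c" using h(3) by (simp add: f_def c_def)
        ultimately have "(p, l) \<in> I" unfolding memI using h c px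
          by (intro exI[of _ i] exI[of _ a] exI[of _ j] exI[of _ c]) simp
        then show "l \<in> {l. (p, l) \<in> I}" by simp
      qed
    qed
    have inj: "inj_on f ({..<rr} \<times> {..<g})"
    proof (rule inj_onI)
      fix u w assume u: "u \<in> {..<rr} \<times> {..<g}" and w: "w \<in> {..<rr} \<times> {..<g}" and fe: "f u = f w"
      obtain a j where u': "u = (a,j)" by (cases u)
      obtain a' j' where w': "w = (a',j')" by (cases w)
      have "a = a' \<and> nat ((int x - F i a j) mod int n) = nat ((int x - F i a' j') mod int n)"
        using fe unfolding u' w' f_def by (subst decode[symmetric]) (use n0 in \<open>simp_all add: nat_less_iff\<close>)
      then have aa: "a = a'" and "nat ((int x - F i a j) mod int n) = nat ((int x - F i a j') mod int n)"
        by auto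
      then have "(int x - F i a j) mod int n = (int x - F i a j') mod int n"
        using n0 by (subst (asm) eq_nat_nat_iff) auto
      then have "int n dvd ((int x - F i a j) - (int x - F i a j'))"
        using mod_eq_dvd_iff by blast
      then have "int n dvd (F i a j' - F i a j)" by simp
      then have "j' = j" using H1[of i a j' j] px(3) u w unfolding u' w' aa by auto
      then show "u = w" using u' w' aa by simp
    qed
    show "card {l. (p, l) \<in> I} = rr*g" unfolding eq using card_image[OF inj] by simp
  qed
  have P3: "\<forall>l<rr*n. card {p. (p, l) \<in> I} = kk*g"
  proof (intro allI impI)
    fix l assume l: "l < rr*n"
    define a where "a = l div n"
    define c where "c = l mod n"
    have lc: "l = a*n + c" "c < n" "a < rr" unfolding a_def c_def using n0 l
      by (simp_all add: less_mult_imp_div_less)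
    define f where "f = (\<lambda>(i,j). i*n + X i a j c)"
    have eq: "{p. (p, l) \<in> I} = f ` ({..<kk} \<times> {..<g})"
    proof (rule set_eqI)
      fix p
      show "p \<in> {p. (p, l) \<in> I} \<longleftrightarrow> p \<in> f ` ({..<kk} \<times> {..<g})"
      proof
        assume "p \<in> {p. (p, l) \<in> I}"
        then obtain i a' j c' where h: "i<kk" "a'<rr" "j<g" "c'<n" "p = i*n + X i a' j c'" "l = a'*n + c'"
          using memI by blast
        have "a'*n + c' = a*n + c" using h(6) lc(1) by simp
        then have "a' = a" "c' = c" using decode[OF h(4) lc(2)] by blast+
        then have "p = f (i,j)" unfolding f_def using h(5) by simp
        then show "p \<in> f ` ({..<kk} \<times> {..<g})" using h by auto
      next
        assume "p \<in> f ` ({..<kk} \<times> {..<g})"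
        then obtain i j where h: "i<kk" "j<g" "p = f (i,j)" by auto
        have "p = i*n + X i a j c" using h(3) by (simp add: f_def)
        then have "(p, l) \<in> I" unfolding memI using h lc
          by (intro exI[of _ i] exI[of _ a] exI[of _ j] exI[of _ c]) simp
        then show "p \<in> {p. (p, l) \<in> I}" by simp
      qed
    qed
    have inj: "inj_on f ({..<kk} \<times> {..<g})"
    proof (rule inj_onI)
      fix u w assume u: "u \<in> {..<kk} \<times> {..<g}" and w: "w \<in> {..<kk} \<times> {..<g}" and fe: "f u = f w"
      obtain i j where u': "u = (i,j)" by (cases u)
      obtain i' j' where w': "w = (i',j')" by (cases w)
      have "i*n + X i a j c = i'*n + X i' a j' c" using fe unfolding u' w' f_def by simp
      then have ii: "i = i'" and "X i a j c = X i' a j' c" using decode[OF Xlt Xlt] by blast+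
      then have "int (X i a j c) = int (X i a j' c)" by simp
      then have "(int c + F i a j) mod int n = (int c + F i a j') mod int n" unfolding Xint .
      then have "int n dvd ((int c + F i a j) - (int c + F i a j'))"
        using mod_eq_dvd_iff by blast
      then have "int n dvd (F i a j - F i a j')" by simp
      then have "j = j'" using H1[of i a j j'] lc(3) u w unfolding u' w' ii by auto
      then show "u = w" using u' w' ii by simp
    qed
    show "card {p. (p, l) \<in> I} = kk*g" unfolding eq using card_image[OF inj] by simp
  qed
  have P4: "\<forall>p q l m. p \<noteq> q \<and> l \<noteq> m \<and> (p, l) \<in> I \<and> (q, l) \<in> I \<and> (p, m) \<in> I \<and> (q, m) \<in> I \<longrightarrow> False"
  proof (intro allI impI, elim conjE)
    fix p q l m assume H: "p \<noteq> q" "l \<noteq> m" "(p, l) \<in> I" "(q, l) \<in> I" "(p, m) \<in> I" "(q, m) \<in> I"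
    obtain i1 a1 j1 c1 where h1: "i1<kk" "a1<rr" "j1<g" "c1<n" "p = i1*n + X i1 a1 j1 c1" "l = a1*n + c1"
      using H(3) memI by blast
    obtain i2 a2 j2 c2 where h2: "i2<kk" "a2<rr" "j2<g" "c2<n" "q = i2*n + X i2 a2 j2 c2" "l = a2*n + c2"
      using H(4) memI by blast
    obtain i3 a3 j3 c3 where h3: "i3<kk" "a3<rr" "j3<g" "c3<n" "p = i3*n + X i3 a3 j3 c3" "m = a3*n + c3"
      using H(5) memI by blast
    obtain i4 a4 j4 c4 where h4: "i4<kk" "a4<rr" "j4<g" "c4<n" "q = i4*n + X i4 a4 j4 c4" "m = a4*n + c4"
      using H(6) memI by blast
    have "a2 = a1" "c2 = c1" using decode[OF h2(4) h1(4)] h1(6) h2(6) by auto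
    moreover have "a4 = a3" "c4 = c3" using decode[OF h4(4) h3(4)] h3(6) h4(6) by auto
    moreover have "i3 = i1" "X i3 a3 j3 c3 = X i1 a1 j1 c1" using decode[OF Xlt Xlt] h1(5) h3(5) by metis+
    moreover have "i4 = i2" "X i4 a4 j4 c4 = X i2 a2 j2 c2" using decode[OF Xlt Xlt] h2(5) h4(5) by metis+
    ultimately have e: "a2 = a1" "c2 = c1" "a4 = a3" "c4 = c3" "i3 = i1" "i4 = i2"
      "X i1 a3 j3 c3 = X i1 a1 j1 c1" "X i2 a3 j4 c3 = X i2 a1 j2 c1" by simp_all
    have m1: "(int c1 + F i1 a1 j1) mod int n = (int c3 + F i1 a3 j3) mod int n"
      using arg_cong[OF e(7), of int] unfolding Xint by simp
    have m2: "(int c1 + F i2 a1 j2) mod int n = (int c3 + F i2 a3 j4) mod int n"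
      using arg_cong[OF e(8), of int] unfolding Xint by simp
    have d1: "int n dvd ((int c1 + F i1 a1 j1) - (int c3 + F i1 a3 j3))" using m1 mod_eq_dvd_iff by blast
    have d2: "int n dvd ((int c1 + F i2 a1 j2) - (int c3 + F i2 a3 j4))" using m2 mod_eq_dvd_iff by blast
    have "int n dvd (((int c1 + F i1 a1 j1) - (int c3 + F i1 a3 j3)) - ((int c1 + F i2 a1 j2) - (int c3 + F i2 a3 j4)))"
      using d1 d2 by (rule dvd_diff)
    moreover have "((int c1 + F i1 a1 j1) - (int c3 + F i1 a3 j3)) - ((int c1 + F i2 a1 j2) - (int c3 + F i2 a3 j4))
       = F i1 a1 j1 - F i2 a1 j2 - F i1 a3 j3 + F i2 a3 j4" by simp
    ultimately have "int n dvd (F i1 a1 j1 - F i2 a1 j2 - F i1 a3 j3 + F i2 a3 j4)" by simp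
    then have "(i1 = i2 \<and> j1 = j2) \<or> (a1 = a3 \<and> j1 = j3)"
      using H2 h1 h2 h3 h4 by blast
    then show False
    proof
      assume "i1 = i2 \<and> j1 = j2"
      then have "p = q" using h1(5) h2(5) e by simp
      then show False using H(1) by simp
    next
      assume a: "a1 = a3 \<and> j1 = j3"
      then have "(int c1 + F i1 a1 j1) mod int n = (int c3 + F i1 a1 j1) mod int n" using m1 by simp
      then have "int n dvd ((int c1 + F i1 a1 j1) - (int c3 + F i1 a1 j1))" using mod_eq_dvd_iff by blast
      then have "int n dvd (int c1 - int c3)" by simp
      then have "int c1 mod int n = int c3 mod int n" using mod_eq_dvd_iff by blast
      then have "c1 = c3" using h1(4) h3(4) by (metis nat_int of_nat_mod mod_less)
      then have "l = m" using h1(6) h3(6) a by simp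
      then show False using H(2) by simp
    qed
  qed
  define R where "R = (bip_adj I)\<^sup>*"
  have Rsym: "(y,x) \<in> R" if "(x,y) \<in> R" for x y
    using rtrancl_sym_swap[OF sym_bip_adj] that unfolding R_def by blast
  have edge: "(Inl (i*n + X i a j c), Inr (a*n+c)) \<in> bip_adj I \<and> (Inr (a*n+c), Inl (i*n + X i a j c)) \<in> bip_adj I"
    if "i<kk" "a<rr" "j<g" "c<n" for i a j c
  proof -
    have "(i*n + X i a j c, a*n+c) \<in> I" unfolding memI using that by blast
    then show ?thesis by (rule bip_adj_edge)
  qed
  have X0: "X i 0 0 x = x" if "i < kk" "x < n" for i x
    using that T1 unfolding X_def by simp
  have X0': "X 0 a 0 c = c" if "a < rr" "c < n" for a c
    using that T2 unfolding X_def by simp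
  have e2: "(Inl (i*n + x), Inr x) \<in> bip_adj I \<and> (Inr x, Inl (i*n + x)) \<in> bip_adj I" if "i<kk" "x<n" for i x
    using edge[OF that(1) rr0 g0 that(2)] X0[OF that] by simp
  have e4: "(Inl c, Inr (a*n+c)) \<in> bip_adj I \<and> (Inr (a*n+c), Inl c) \<in> bip_adj I" if "a<rr" "c<n" for a c
    using edge[OF kk0 that(1) g0 that(2)] X0'[OF that] by simp
  define V where "V = F is as js"
  have XV: "X is as js c = nat ((int c + V) mod int n)" for c unfolding X_def V_def by simp
  have step: "(Inr (as*n + c), Inr (as*n + X is as js c)) \<in> R" if c: "c < n" for c
  proof -
    define y where "y = X is as js c"
    have y: "y < n" unfolding y_def by (rule Xlt)
    have "(Inr (as*n+c), Inl (is*n + y)) \<in> bip_adj I" using edge[OF S(1,2,3) c] y_def by simp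
    moreover have "(Inl (is*n + y), Inr y) \<in> bip_adj I" using e2[OF S(1) y] by simp
    moreover have "(Inr y, Inl y) \<in> bip_adj I" using e2[OF kk0 y] by simp
    moreover have "(Inl y, Inr (as*n + y)) \<in> bip_adj I" using e4[OF S(2) y] by simp
    ultimately show ?thesis unfolding R_def y_def
      by (meson converse_rtrancl_into_rtrancl r_into_rtrancl)
  qed
  have iter: "(Inr (as*n + c), Inr (as*n + nat ((int c + int t * V) mod int n))) \<in> R" if c: "c < n" for c t
  proof (induction t)
    case 0
    then show ?case using c unfolding R_def by simp
  next
    case (Suc t)
    define y where "y = nat ((int c + int t * V) mod int n)"
    have y: "y < n" unfolding y_def using n0 by (simp add: nat_less_iff)
    have yi: "int y = (int c + int t * V) mod int n" unfolding y_def using n0 by simp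
    have "(Inr (as*n + y), Inr (as*n + X is as js y)) \<in> R" using step[OF y] .
    moreover have "X is as js y = nat ((int c + int (Suc t) * V) mod int n)"
    proof -
      have "((int c + int t * V) mod int n + V) mod int n = (int c + int t*V + V) mod int n"
        by (rule mod_add_left_eq)
      moreover have "int c + int t * V + V = int c + int (Suc t) * V" by (simp add: algebra_simps)
      ultimately show ?thesis unfolding XV yi by simp
    qed
    ultimately show ?case using Suc unfolding R_def y_def by (metis rtrancl_trans)
  qed
  have plus1: "(Inr (as*n + c), Inr (as*n + (c+1) mod n)) \<in> R" if c: "c < n" for c
  proof -
    obtain x where x: "[V * x = 1] (mod int n)" using cong_solve_coprime_int S(4) unfolding V_def by blast
    define t where "t = nat (x mod int n)"
    have ti: "int t = x mod int n" unfolding t_def using n0 by simp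
    have "(int c + int t * V) mod int n = (int c + (V * x) mod int n) mod int n" by (rule modA[OF ti])
    also have "\<dots> = (int c + 1) mod int n" by (rule modB[OF x])
    finally have "nat ((int c + int t * V) mod int n) = (c+1) mod n" using modC by simp
    then show ?thesis using iter[OF c, of t] by simp
  qed
  have line_as: "(Inr (as*n), Inr (as*n + c)) \<in> R" if "c < n" for c
    using that
  proof (induction c)
    case 0 then show ?case unfolding R_def by simp
  next
    case (Suc c)
    then have "(Inr (as*n), Inr (as*n + c)) \<in> R" by simp
    moreover have "(Inr (as*n + c), Inr (as*n + Suc c)) \<in> R" using plus1[of c] Suc(2) by simp
    ultimately show ?case unfolding R_def by (rule rtrancl_trans)
  qed
  have rootall: "(Inr (as*n), z) \<in> R" if z: "z \<in> bip_vertices (kk*n) (rr*n)" for z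
  proof -
    consider p where "z = Inl p" "p < kk*n" | l where "z = Inr l" "l < rr*n"
      using z unfolding bip_vertices_def by auto
    then show ?thesis
    proof cases
      case (1 p)
      define i where "i = p div n"
      define x where "x = p mod n"
      have px: "p = i*n + x" "x < n" "i < kk" unfolding i_def x_def using n0 1(2)
        by (simp_all add: less_mult_imp_div_less)
      have "(Inr (as*n), Inr (as*n + x)) \<in> R" using line_as[OF px(2)] .
      moreover have "(Inr (as*n + x), Inl x) \<in> bip_adj I" using e4[OF S(2) px(2)] by simp
      moreover have "(Inl x, Inr x) \<in> bip_adj I" using e2[OF kk0 px(2)] by simp
      moreover have "(Inr x, Inl (i*n+x)) \<in> bip_adj I" using e2[OF px(3) px(2)] by simp
      ultimately show ?thesis unfolding R_def 1 px(1) by (meson rtrancl_into_rtrancl)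
    next
      case (2 l)
      define a where "a = l div n"
      define c where "c = l mod n"
      have lc: "l = a*n + c" "c < n" "a < rr" unfolding a_def c_def using n0 2(2)
        by (simp_all add: less_mult_imp_div_less)
      have "(Inr (as*n), Inr (as*n + c)) \<in> R" using line_as[OF lc(2)] .
      moreover have "(Inr (as*n + c), Inl c) \<in> bip_adj I" using e4[OF S(2) lc(2)] by simp
      moreover have "(Inl c, Inr (a*n+c)) \<in> bip_adj I" using e4[OF lc(3) lc(2)] by simp
      ultimately show ?thesis unfolding R_def 2 lc(1) by (meson rtrancl_into_rtrancl)
    qed
  qed
  have P5: "\<forall>x\<in>bip_vertices (kk*n) (rr*n). \<forall>y\<in>bip_vertices (kk*n) (rr*n). (x, y) \<in> (bip_adj I)\<^sup>*"
  proof (intro ballI)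
    fix x y assume "x \<in> bip_vertices (kk*n) (rr*n)" "y \<in> bip_vertices (kk*n) (rr*n)"
    then have "(x, Inr (as*n)) \<in> R" "(Inr (as*n), y) \<in> R" using rootall Rsym by blast+
    then show "(x, y) \<in> (bip_adj I)\<^sup>*" unfolding R_def by (rule rtrancl_trans)
  qed
  show ?thesis unfolding is_configuration_def I_def[symmetric] using P1 P2 P3 P4 P5 by blast
qed

lemma pow2_zero_case:
  assumes "(1::nat) + 2^b = 2^c + 2^d"
  shows "(0=c \<and> b=d) \<or> (0=d \<and> b=c)"
proof (cases "b = 0")
  case True
  then have e: "2 = (2::nat)^c + 2^d" using assms by simp
  have "c = 0"
  proof (rule ccontr)
    assume "c \<noteq> 0"
    then have "(2::nat)^c \<ge> 2" by (simp add: self_le_power)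
    moreover have "(2::nat)^d \<ge> 1" by simp
    ultimately show False using e by linarith
  qed
  then have d1: "(2::nat)^d = 1" using e by simp
  have "d = 0"
  proof (rule ccontr)
    assume "d \<noteq> 0"
    then have "(2::nat)^d \<ge> 2" by (simp add: self_le_power)
    then show False using d1 by simp
  qed
  then show ?thesis using True \<open>c = 0\<close> by simp
next
  case False
  then have ev: "even ((2::nat)^b)" by simp
  then have "odd ((2::nat)^c + 2^d)" using assms by (metis even_add odd_one)
  then have "(c = 0) \<noteq> (d = 0)" by auto
  then show ?thesis
  proof (cases "c = 0")
    case True
    then have "(2::nat)^b = 2^d" using assms by simp
    then show ?thesis using True by simp
  next
    case False
    then have "d = 0" using \<open>(c = 0) \<noteq> (d = 0)\<close> by simp
    then have "(2::nat)^b = 2^c" using assms by simp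
    then show ?thesis using \<open>d = 0\<close> by simp
  qed
qed

lemma pow2_sidon:
  "(2::nat)^a + 2^b = 2^c + 2^d \<Longrightarrow> (a=c \<and> b=d) \<or> (a=d \<and> b=c)"
proof (induction "a+b+c+d" arbitrary: a b c d rule: less_induct)
  case less
  show ?case
  proof (cases "a = 0 \<or> b = 0 \<or> c = 0 \<or> d = 0")
    case True
    then consider "a = 0" | "b = 0" | "c = 0" | "d = 0" by blast
    then show ?thesis
    proof cases
      case 1 then show ?thesis using pow2_zero_case[of b c d] less.prems by auto
    next
      case 2 then show ?thesis using pow2_zero_case[of a c d] less.prems by (auto simp: add.commute)
    next
      case 3 then show ?thesis using pow2_zero_case[of d a b] less.prems by auto
    next
      case 4 then show ?thesis using pow2_zero_case[of c a b] less.prems by (auto simp: add.commute)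
    qed
  next
    case False
    then have pos: "a > 0" "b > 0" "c > 0" "d > 0" by auto
    have "(2::nat) * (2^(a-1) + 2^(b-1)) = 2 * (2^(c-1) + 2^(d-1))"
      using less.prems pos by (simp add: distrib_left power_eq_if)
    then have "(2::nat)^(a-1) + 2^(b-1) = 2^(c-1) + 2^(d-1)" by simp
    moreover have "(a-1) + (b-1) + (c-1) + (d-1) < a + b + c + d" using pos by simp
    ultimately have "(a-1=c-1 \<and> b-1=d-1) \<or> (a-1=d-1 \<and> b-1=c-1)" using less.hyps by blast
    then show ?thesis using pos by auto
  qed
qed

lemma pow2_sidon_int:
  "(2::int)^a + 2^b = 2^c + 2^d \<Longrightarrow> (a=c \<and> b=d) \<or> (a=d \<and> b=c)"
proof -
  assume "(2::int)^a + 2^b = 2^c + 2^d"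
  then have "int (2^a + 2^b) = int (2^c + 2^d)" by simp
  then have "(2::nat)^a + 2^b = 2^c + 2^d" by (simp only: of_nat_eq_iff)
  then show ?thesis by (rule pow2_sidon)
qed

lemma dvd_small_zero: "int n dvd (z::int) \<Longrightarrow> \<bar>z\<bar> < int n \<Longrightarrow> z = 0"
proof (rule ccontr)
  assume "int n dvd z" "\<bar>z\<bar> < int n" "z \<noteq> 0"
  then have "\<bar>int n\<bar> \<le> \<bar>z\<bar>" using dvd_imp_le_int by blast
  then show False using \<open>\<bar>z\<bar> < int n\<close> by simp
qed

lemma frobenius:
  fixes a b N :: nat
  assumes a: "a > 0" and b: "b > 0" and cp: "coprime a b" and N: "N \<ge> a*b"
  shows "\<exists>x y. N = x*a + y*b"
proof -
  obtain x where x: "[a*x = Suc 0] (mod b)" using cong_solve_coprime_nat[OF cp] by blast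
  define u where "u = (x*N) mod b"
  have ub: "u < b" unfolding u_def using b by simp
  have "[a*u = a*(x*N)] (mod b)" unfolding u_def by (simp add: cong_def mod_mult_right_eq)
  also have "a*(x*N) = (a*x)*N" by simp
  also have "[(a*x)*N = Suc 0 * N] (mod b)" using x by (rule cong_mult) simp
  finally have cu: "[a*u = N] (mod b)" by simp
  have "a*u \<le> a*b" using ub by (intro mult_le_mono2) simp
  then have le: "a*u \<le> N" using N by linarith
  have "N mod b = (a*u) mod b" using cu unfolding cong_def by simp
  then have "b dvd (N - a*u)" using mod_eq_dvd_iff_nat[OF le] by blast
  then obtain y where y: "N - a*u = b*y" by blast
  have "N = u*a + y*b" using y le by (simp add: algebra_simps)
  then show ?thesis by blast
qed

lemma coprime_lin: "coprime (W*M+1) (W::nat)"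
proof -
  have "coprime (W*M) (Suc (W*M))" by (rule coprime_Suc_right_nat)
  then have "coprime W (Suc (W*M))" using coprime_mult_left_iff[of W M "Suc (W*M)"] by blast
  then show ?thesis by (simp add: coprime_commute)
qed

lemma big_in_D:
  assumes r: "r \<ge> 2" and k: "k \<ge> 2"
  shows "\<exists>W M0. W > 0 \<and> (\<forall>M\<ge>M0. W*M+1 \<in> D r k)"
proof -
  define g where "g = gcd r k"
  define kk where "kk = k div g"
  define rr where "rr = r div g"
  have g0: "g > 0" unfolding g_def using r by simp
  have kkg: "kk*g = k" unfolding kk_def g_def by simp
  have rrg: "rr*g = r" unfolding rr_def g_def by simp
  have kk0: "kk > 0" using kkg k by (cases kk) auto
  have rr0: "rr > 0" using rrg r by (cases rr) auto
  define N where "N = kk*rr*g"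
  define idx where "idx = (\<lambda>i a j. (i*rr + a)*g + j)"
  have idx_lt: "idx i a j < N" if "i<kk" "a<rr" "j<g" for i a j
  proof -
    have "i*rr + a < kk*rr" using lt_mult_bound[OF that(1,2)] .
    then have "(i*rr + a)*g + j < (kk*rr)*g" by (rule lt_mult_bound[OF _ that(3)])
    then show ?thesis unfolding idx_def N_def by simp
  qed
  have idx_inj: "i = i' \<and> a = a' \<and> j = j'" if "idx i a j = idx i' a' j'" "a<rr" "a'<rr" "j<g" "j'<g" for i a j i' a' j'
  proof -
    have e: "(i*rr + a)*g + j = (i'*rr + a')*g + j'" using that(1) unfolding idx_def by simp
    have "i*rr + a = i'*rr + a' \<and> j = j'" using decode[OF that(4) that(5), of "i*rr+a" "i'*rr+a'"] e by simp
    then show ?thesis using decode[OF that(2) that(3), of i i'] by simp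
  qed
  define \<sigma> where "\<sigma> = (\<lambda>i a j. (2::int)^(idx i a j))"
  define Fv where "Fv = (\<lambda>i a j. \<sigma> i a j - \<sigma> i 0 0 - \<sigma> 0 a 0 + \<sigma> 0 0 0)"
  have \<sigma>pos: "0 < \<sigma> i a j" for i a j unfolding \<sigma>_def by simp
  have \<sigma>lt: "\<sigma> i a j < 2^N" if "i<kk" "a<rr" "j<g" for i a j
    unfolding \<sigma>_def using idx_lt[OF that] by simp
  obtain i0 a0 j0 where S: "i0 < kk" "a0 < rr" "j0 < g" "Fv i0 a0 j0 > 0"
  proof (cases "g \<ge> 2")
    case True
    have "idx 0 0 1 = 1" "idx 0 0 0 = 0" unfolding idx_def by simp_all
    then have "Fv 0 0 1 = 1" unfolding Fv_def \<sigma>_def by simp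
    then show ?thesis using that[of 0 0 1] kk0 rr0 True by simp
  next
    case False
    then have g1: "g = 1" using g0 by simp
    then have "kk = k" "rr = r" using kkg rrg by simp_all
    then have kr: "kk \<ge> 2" "rr \<ge> 2" using k r by simp_all
    have "idx 1 1 0 = rr + 1" "idx 1 0 0 = rr" "idx 0 1 0 = 1" "idx 0 0 0 = 0" unfolding idx_def g1 by simp_all
    then have "Fv 1 1 0 = 2^(rr+1) - 2^rr - 2 + 1" unfolding Fv_def \<sigma>_def by simp
    also have "\<dots> = 2^rr - (1::int)" by simp
    finally have fv: "Fv 1 1 0 = 2^rr - 1" .
    have "(2::int)^rr \<ge> 2^2" using kr(2) by (intro power_increasing) simp_all
    then have "Fv 1 1 0 > 0" using fv by simp
    then show ?thesis using that[of 1 1 0] kr g0 by simp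
  qed
  define V where "V = Fv i0 a0 j0"
  define W where "W = nat V"
  have W0: "W > 0" unfolding W_def V_def using S(4) by simp
  have VW: "V = int W" unfolding W_def V_def using S(4) by simp
  have main: "W*M+1 \<in> D r k" if M: "M \<ge> 2^(N+1)" for M
  proof -
    define n where "n = W*M+1"
    have nbig: "int n > 2^(N+1)"
    proof -
      have "M \<le> W*M" using W0 by simp
      then have "n > 2^(N+1)" unfolding n_def using M by linarith
      then have "int (2^(N+1)) < int n" by (simp only: of_nat_less_iff)
      then show ?thesis by simp
    qed
    have n0: "n > 0" unfolding n_def by simp
    have p2: "(2::int)^(N+1) = 2*2^N" by simp
    have "is_configuration (kk*n) (rr*n) (rr*g) (kk*g) (liftI kk rr g n Fv)"
    proof (rule lift_config[OF n0 kk0 rr0 g0])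
      fix i a j j' assume h: "i<kk" "a<rr" "j<g" "j'<g" "int n dvd (Fv i a j - Fv i a j')"
      have eq: "Fv i a j - Fv i a j' = \<sigma> i a j - \<sigma> i a j'" unfolding Fv_def by simp
      have "\<bar>\<sigma> i a j - \<sigma> i a j'\<bar> < int n"
        using \<sigma>lt[OF h(1,2,3)] \<sigma>lt[OF h(1,2,4)] \<sigma>pos[of i a j] \<sigma>pos[of i a j'] nbig p2
        unfolding abs_less_iff by linarith
      then have "\<sigma> i a j - \<sigma> i a j' = 0" using dvd_small_zero[of n "\<sigma> i a j - \<sigma> i a j'"] h(5) unfolding eq by blast
      then have "\<sigma> i a j = \<sigma> i a j'" by simp
      then have "idx i a j = idx i a j'" unfolding \<sigma>_def by simp
      then show "j = j'" using idx_inj[of i a j i a j'] h by simp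
    next
      fix i i' a a' j1 j2 j3 j4
      assume h: "i<kk" "i'<kk" "a<rr" "a'<rr" "j1<g" "j2<g" "j3<g" "j4<g"
        "int n dvd (Fv i a j1 - Fv i' a j2 - Fv i a' j3 + Fv i' a' j4)"
      have eq: "Fv i a j1 - Fv i' a j2 - Fv i a' j3 + Fv i' a' j4 = \<sigma> i a j1 - \<sigma> i' a j2 - \<sigma> i a' j3 + \<sigma> i' a' j4"
        unfolding Fv_def by simp
      have "\<bar>\<sigma> i a j1 - \<sigma> i' a j2 - \<sigma> i a' j3 + \<sigma> i' a' j4\<bar> < int n"
        using \<sigma>lt[OF h(1,3,5)] \<sigma>lt[OF h(2,3,6)] \<sigma>lt[OF h(1,4,7)] \<sigma>lt[OF h(2,4,8)]
          \<sigma>pos[of i a j1] \<sigma>pos[of i' a j2] \<sigma>pos[of i a' j3] \<sigma>pos[of i' a' j4] nbig p2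
        unfolding abs_less_iff by linarith
      then have "\<sigma> i a j1 - \<sigma> i' a j2 - \<sigma> i a' j3 + \<sigma> i' a' j4 = 0" using dvd_small_zero h(9) unfolding eq by blast
      then have "(2::int)^(idx i a j1) + 2^(idx i' a' j4) = 2^(idx i' a j2) + 2^(idx i a' j3)"
        unfolding \<sigma>_def by simp
      then have "(idx i a j1 = idx i' a j2 \<and> idx i' a' j4 = idx i a' j3) \<or> (idx i a j1 = idx i a' j3 \<and> idx i' a' j4 = idx i' a j2)"
        by (rule pow2_sidon_int)
      then show "(i = i' \<and> j1 = j2) \<or> (a = a' \<and> j1 = j3)"
        using idx_inj[of i a j1 i' a j2] idx_inj[of i a j1 i a' j3] h by blast
    next
      fix i assume "i < kk" then show "Fv i 0 0 = 0" unfolding Fv_def by simp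
    next
      fix a assume "a < rr" then show "Fv 0 a 0 = 0" unfolding Fv_def by simp
    next
      show "i0 < kk" "a0 < rr" "j0 < g" using S by simp_all
      have "coprime W n" unfolding n_def using coprime_lin[of W M] by (simp add: coprime_commute)
      then have "coprime (int W) (int n)" by simp
      then show "coprime (Fv i0 a0 j0) (int n)" using VW V_def by simp
    qed
    then have "is_configuration (n*kk) (n*rr) r k (liftI kk rr g n Fv)"
      unfolding kkg rrg by (simp only: mult.commute)
    then have "configurable (n*kk) (n*rr) r k" unfolding configurable_def by blast
    then have "n \<in> D r k" unfolding D_def kk_def rr_def g_def by simp
    then show ?thesis unfolding n_def .
  qed
  show ?thesis using W0 main by blast
qed

lemma D_zero: "0 \<in> D r k"
  unfolding D_def configurable_def by simp

lemma D_add: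
  assumes r: "r \<ge> 2" and k: "k \<ge> 2" and d1: "d1 \<in> D r k" and d2: "d2 \<in> D r k"
  shows "d1 + d2 \<in> D r k"
proof -
  define kk where "kk = k div gcd r k"
  define rr where "rr = r div gcd r k"
  have kkg: "kk * gcd r k = k" unfolding kk_def by simp
  have kk0: "kk > 0" using kkg k by (cases kk) auto
  show ?thesis
  proof (cases "d1 = 0 \<or> d2 = 0")
    case True
    then show ?thesis using d1 d2 by auto
  next
    case False
    then have p1: "d1*kk > 0" and p2: "d2*kk > 0" using kk0 by auto
    from d1 have "configurable (d1*kk) (d1*rr) r k" unfolding D_def kk_def rr_def by simp
    then obtain I1 where I1: "is_configuration (d1*kk) (d1*rr) r k I1"
      unfolding configurable_def using p1 by auto
    from d2 have "configurable (d2*kk) (d2*rr) r k" unfolding D_def kk_def rr_def by simp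
    then obtain I2 where I2: "is_configuration (d2*kk) (d2*rr) r k I2"
      unfolding configurable_def using p2 by auto
    obtain I where "is_configuration (d1*kk + d2*kk) (d1*rr + d2*rr) r k I"
      using combine[OF I1 I2 p1 p2 r k] by blast
    then have "is_configuration ((d1+d2)*kk) ((d1+d2)*rr) r k I" by (simp add: add_mult_distrib)
    then have "configurable ((d1+d2)*kk) ((d1+d2)*rr) r k" unfolding configurable_def by blast
    then show ?thesis unfolding D_def kk_def rr_def by simp
  qed
qed

lemma D_mult:
  assumes r: "r \<ge> 2" and k: "k \<ge> 2" and a: "a \<in> D r k"
  shows "x*a \<in> D r k"
proof (induction x)
  case 0 then show ?case using D_zero by simp
next
  case (Suc x)
  then show ?case using D_add[OF r k a Suc] by (simp add: add.commute)
qed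

theorem theorem2:
  fixes r k :: nat
  assumes "r \<ge> 2" and "k \<ge> 2"
  shows "numerical_semigroup (D r k)"
proof -
  obtain W M0 where W0: "W > 0" and main: "\<And>M. M \<ge> M0 \<Longrightarrow> W*M+1 \<in> D r k"
    using big_in_D[OF assms] by blast
  define n1 where "n1 = W*M0+1"
  define n2 where "n2 = W*(M0+1)+1"
  have n1D: "n1 \<in> D r k" unfolding n1_def using main by simp
  have n2D: "n2 \<in> D r k" unfolding n2_def using main[of "M0+1"] by simp
  have "gcd n1 n2 = gcd n1 W" unfolding n1_def n2_def
    by (metis add.commute add.left_commute gcd_add2 mult_Suc_right Suc_eq_plus1)
  also have "\<dots> = 1" using coprime_lin[of W M0] unfolding n1_def by (simp add: coprime_iff_gcd_eq_1)
  finally have cp: "coprime n1 n2" by (simp add: coprime_iff_gcd_eq_1)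
  have n1p: "n1 > 0" and n2p: "n2 > 0" unfolding n1_def n2_def by simp_all
  have big: "N \<in> D r k" if NN: "N \<ge> n1*n2" for N
  proof -
    obtain x y where "N = x*n1 + y*n2"
      using frobenius[OF n1p n2p cp NN] by blast
    then show ?thesis using D_add[OF assms D_mult[OF assms n1D] D_mult[OF assms n2D]] by simp
  qed
  have "UNIV - D r k \<subseteq> {..<n1*n2}"
  proof
    fix N assume "N \<in> UNIV - D r k"
    then have "\<not> N \<ge> n1*n2" using big by blast
    then show "N \<in> {..<n1*n2}" by simp
  qed
  then have "finite (UNIV - D r k)" using finite_subset by blast
  then show ?thesis unfolding numerical_semigroup_def using D_zero D_add[OF assms] by blast
qed

end
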